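(* Let $\Delta\vdash t$ be a closed nominal term-in-context and $\hat t=\mathcal{T}(\Delta,t)$. For each occurrence of a variable $X$ in $t$ there is a corresponding occurrence of the meta-variable $X$ in $\hat t$ (at the same position), and there exists $n$ such that all occurrences of $X$ in $\hat t$ are in meta-applications with exactly $n$ arguments.
   Context: Nominal terms: $s,t ::= a \mid \pi\cdot X \mid [a]s \mid f\,s \mid (s_1,\ldots,s_n)$ over atoms, variables, function symbols, finite-support permutations $\pi$ of atoms. A freshness context $\Delta$ is a set of constraints $a\#X$. $\Delta\vdash t$ is closed if: (1) every atom occurrence $a$ in $t$ lies under an abstraction $[a]$; (2) if $\pi\cdot X$ is in the scope of an abstraction of $\pi(a)$ then every occurrence $\pi'\cdot X$ of $X$ in $t$ is in the scope of an abstraction of $\pi'(a)$, or $a\#X\in\Delta$; (3) for two occurrences $\pi_1\cdot X,\pi_2\cdot X$ and $a$ with $\pi_1(a)\neq\pi_2(a)$, if $a$ is not abstracted in one of the occurrences then $a\#X\in\Delta$. Translation: $\Lambda_t(X)$ is the set of atoms $a$ such that some occurrence of $X$ in $t$ is in the scope of $[a]$. With a fixed total order on atoms, $\mathcal{T}(\Delta,t)$ is the CRS meta-term obtained from $t$ by replacing each occurrence $\pi\cdot X$ by the meta-application $X(\pi\cdot xs)$, where $xs$ is the ascending list of $\{\pi^{-1}(a)\mid a\in\Lambda_t(X)\}\setminus\{a\mid a\#X\in\Delta\}$ and $\pi\cdot xs$ applies $\pi$ elementwise (no arguments if empty); other constructs are kept unchanged. *)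

theory Defs
  imports "HOL-Combinatorics.Perm"
begin

datatype ('f, 'v) nterm =
    NAtom nat
  | NSusp "nat perm" 'v
  | NAbs nat "('f, 'v) nterm"
  | NFun 'f "('f, 'v) nterm"
  | NTup "('f, 'v) nterm list"

text \<open>CRS meta-terms: atoms become CRS variables; a meta-application of a
  meta-variable X to a list of (CRS) variables.\<close>
datatype ('f, 'v) mterm =
    MAtom nat
  | MApp 'v "nat list"
  | MAbs nat "('f, 'v) mterm"
  | MFun 'f "('f, 'v) mterm"
  | MTup "('f, 'v) mterm list"

type_synonym 'v fctx = "(nat \<times> 'v) set"  \<comment> \<open>(a, X) stands for a # X\<close>

fun var_occs :: "nat set \<Rightarrow> ('f, 'v) nterm \<Rightarrow> (nat set \<times> nat perm \<times> 'v) set" where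
  "var_occs B (NAtom a) = {}"
| "var_occs B (NSusp \<pi> X) = {(B, \<pi>, X)}"
| "var_occs B (NAbs a s) = var_occs (insert a B) s"
| "var_occs B (NFun f s) = var_occs B s"
| "var_occs B (NTup ss) = (\<Union>s \<in> set ss. var_occs B s)"

fun atom_occs :: "nat set \<Rightarrow> ('f, 'v) nterm \<Rightarrow> (nat set \<times> nat) set" where
  "atom_occs B (NAtom a) = {(B, a)}"
| "atom_occs B (NSusp \<pi> X) = {}"
| "atom_occs B (NAbs a s) = atom_occs (insert a B) s"
| "atom_occs B (NFun f s) = atom_occs B s"
| "atom_occs B (NTup ss) = (\<Union>s \<in> set ss. atom_occs B s)"

definition closed_nt :: "'v fctx \<Rightarrow> ('f, 'v) nterm \<Rightarrow> bool" where
  "closed_nt \<Delta> t \<longleftrightarrow>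
     (\<forall>(B, a) \<in> atom_occs {} t. a \<in> B) \<and>
     (\<forall>(B, \<pi>, X) \<in> var_occs {} t. \<forall>a. Perm.apply (\<pi>) a \<in> B \<longrightarrow>
        ((\<forall>(B', \<pi>', X') \<in> var_occs {} t. X' = X \<longrightarrow> Perm.apply (\<pi>') a \<in> B') \<or> (a, X) \<in> \<Delta>)) \<and>
     (\<forall>(B1, \<pi>1, X1) \<in> var_occs {} t. \<forall>(B2, \<pi>2, X2) \<in> var_occs {} t. \<forall>a.
        X1 = X2 \<and> Perm.apply (\<pi>1) a \<noteq> Perm.apply (\<pi>2) a \<and> (Perm.apply (\<pi>1) a \<notin> B1 \<or> Perm.apply (\<pi>2) a \<notin> B2)
        \<longrightarrow> (a, X1) \<in> \<Delta>)"

definition Lam :: "('f, 'v) nterm \<Rightarrow> 'v \<Rightarrow> nat set" where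
  "Lam t X = \<Union>{B. \<exists>\<pi>. (B, \<pi>, X) \<in> var_occs {} t}"

fun tr :: "('v \<Rightarrow> nat set) \<Rightarrow> 'v fctx \<Rightarrow> ('f, 'v) nterm \<Rightarrow> ('f, 'v) mterm" where
  "tr L \<Delta> (NAtom a) = MAtom a"
| "tr L \<Delta> (NSusp \<pi> X) =
     MApp X (map (\<lambda>b. Perm.apply (\<pi>) b)
       (sorted_list_of_set ((\<lambda>a. Perm.apply (inverse \<pi>) a) ` L X - {a. (a, X) \<in> \<Delta>})))"
| "tr L \<Delta> (NAbs a s) = MAbs a (tr L \<Delta> s)"
| "tr L \<Delta> (NFun f s) = MFun f (tr L \<Delta> s)"
| "tr L \<Delta> (NTup ss) = MTup (map (tr L \<Delta>) ss)"

definition translate :: "'v fctx \<Rightarrow> ('f, 'v) nterm \<Rightarrow> ('f, 'v) mterm" where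
  "translate \<Delta> t = tr (Lam t) \<Delta> t"

fun nsub :: "('f, 'v) nterm \<Rightarrow> nat list \<Rightarrow> ('f, 'v) nterm option" where
  "nsub t [] = Some t"
| "nsub (NAbs a s) (0 # p) = nsub s p"
| "nsub (NFun f s) (0 # p) = nsub s p"
| "nsub (NTup ss) (i # p) = (if i < length ss then nsub (ss ! i) p else None)"
| "nsub _ _ = None"

fun msub :: "('f, 'v) mterm \<Rightarrow> nat list \<Rightarrow> ('f, 'v) mterm option" where
  "msub t [] = Some t"
| "msub (MAbs a s) (0 # p) = msub s p"
| "msub (MFun f s) (0 # p) = msub s p"
| "msub (MTup ss) (i # p) = (if i < length ss then msub (ss ! i) p else None)"
| "msub _ _ = None"

end

theory Submission
  imports Defs
begin

lemma nsub_tr: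
  "nsub t p = Some (NSusp \<pi> X) \<Longrightarrow> msub (tr L \<Delta> t) p = Some (tr L \<Delta> (NSusp \<pi> X))"
proof (induction t arbitrary: p)
  case (NAtom x) then show ?case by (cases p) auto
next
  case (NSusp x1 x2) then show ?case by (cases p) auto
next
  case (NAbs x1 t) then show ?case
  proof (cases p)
    case (Cons a q) then show ?thesis using NAbs by (cases a) auto
  qed simp
next
  case (NFun x1 t) then show ?case
  proof (cases p)
    case (Cons a q) then show ?thesis using NFun by (cases a) auto
  qed simp
next
  case (NTup ss) then show ?case
    by (cases p) (auto split: if_splits)
qed

lemma msub_tr:
  "msub (tr L \<Delta> t) p = Some (MApp X xs) \<Longrightarrow> \<exists>\<pi>. nsub t p = Some (NSusp \<pi> X) \<and> tr L \<Delta> (NSusp \<pi> X) = MApp X xs"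
proof (induction t arbitrary: p)
  case (NAtom x) then show ?case by (cases p) auto
next
  case (NSusp x1 x2) then show ?case by (cases p) auto
next
  case (NAbs x1 t) then show ?case
  proof (cases p)
    case (Cons a q) then show ?thesis using NAbs by (cases a) auto
  qed simp
next
  case (NFun x1 t) then show ?case
  proof (cases p)
    case (Cons a q) then show ?thesis using NFun by (cases a) auto
  qed simp
next
  case (NTup ss) then show ?case
    by (cases p) (auto split: if_splits)
qed

lemma nsub_occ:
  "nsub t p = Some (NSusp \<pi> X) \<Longrightarrow> \<exists>B. (B, \<pi>, X) \<in> var_occs B0 t"
proof (induction t p arbitrary: B0 rule: nsub.induct)
  case (4 ss i p)
  then have "i < length ss" "nsub (ss ! i) p = Some (NSusp \<pi> X)" by (auto split: if_splits)
  with 4 obtain B where "(B, \<pi>, X) \<in> var_occs B0 (ss ! i)" by blast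
  with \<open>i < length ss\<close> show ?case by (auto intro!: bexI[of _ "ss ! i"])
qed auto

lemma closed2:
  assumes "closed_nt \<Delta> t" "(B, \<pi>, X) \<in> var_occs {} t" "Perm.apply \<pi> a \<in> B"
    "(B', \<pi>', X) \<in> var_occs {} t" "(a, X) \<notin> \<Delta>"
  shows "Perm.apply \<pi>' a \<in> B'"
proof -
  have H: "\<forall>(B, \<pi>, X) \<in> var_occs {} t. \<forall>a. Perm.apply (\<pi>) a \<in> B \<longrightarrow>
        ((\<forall>(B', \<pi>', X') \<in> var_occs {} t. X' = X \<longrightarrow> Perm.apply (\<pi>') a \<in> B') \<or> (a, X) \<in> \<Delta>)"
    using assms(1) unfolding closed_nt_def by (elim conjE) assumption
  have H1: "\<forall>a. Perm.apply (\<pi>) a \<in> B \<longrightarrow>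
        ((\<forall>(B', \<pi>', X') \<in> var_occs {} t. X' = X \<longrightarrow> Perm.apply (\<pi>') a \<in> B') \<or> (a, X) \<in> \<Delta>)"
    using bspec[OF H assms(2)] by simp
  have H2: "\<forall>(B', \<pi>', X') \<in> var_occs {} t. X' = X \<longrightarrow> Perm.apply (\<pi>') a \<in> B'"
    using spec[OF H1, of a] assms(3,5) by blast
  from bspec[OF H2 assms(4)] show ?thesis by simp
qed

lemma closed3:
  assumes "closed_nt \<Delta> t" "(B1, \<pi>1, X) \<in> var_occs {} t" "(B2, \<pi>2, X) \<in> var_occs {} t"
    "Perm.apply \<pi>1 a \<noteq> Perm.apply \<pi>2 a" "(a, X) \<notin> \<Delta>"
  shows "Perm.apply \<pi>1 a \<in> B1 \<and> Perm.apply \<pi>2 a \<in> B2"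
proof -
  have H: "\<forall>(B1, \<pi>1, X1) \<in> var_occs {} t. \<forall>(B2, \<pi>2, X2) \<in> var_occs {} t. \<forall>a.
        X1 = X2 \<and> Perm.apply (\<pi>1) a \<noteq> Perm.apply (\<pi>2) a \<and> (Perm.apply (\<pi>1) a \<notin> B1 \<or> Perm.apply (\<pi>2) a \<notin> B2)
        \<longrightarrow> (a, X1) \<in> \<Delta>"
    using assms(1) unfolding closed_nt_def by (elim conjE) assumption
  have H1: "\<forall>(B2', \<pi>2', X2) \<in> var_occs {} t. \<forall>a.
        X = X2 \<and> Perm.apply (\<pi>1) a \<noteq> Perm.apply (\<pi>2') a \<and> (Perm.apply (\<pi>1) a \<notin> B1 \<or> Perm.apply (\<pi>2') a \<notin> B2')
        \<longrightarrow> (a, X) \<in> \<Delta>"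
    using bspec[OF H assms(2)] by simp
  have H2: "\<forall>a. Perm.apply (\<pi>1) a \<noteq> Perm.apply (\<pi>2) a \<and> (Perm.apply (\<pi>1) a \<notin> B1 \<or> Perm.apply (\<pi>2) a \<notin> B2)
        \<longrightarrow> (a, X) \<in> \<Delta>"
    using bspec[OF H1 assms(3)] by simp
  from spec[OF H2, of a] assms(4,5) show ?thesis by blast
qed

lemma perm_ai': "Perm.apply \<pi> (Perm.apply (inverse \<pi>) b) = b"
  by (simp add: apply_inverse bij_is_surj surj_f_inv_f)

lemma key_set:
  assumes c: "closed_nt \<Delta> t" and occ: "(B, \<pi>, X) \<in> var_occs {} t"
  shows "(\<lambda>a. Perm.apply (inverse \<pi>) a) ` Lam t X - {a. (a, X) \<in> \<Delta>}
       = {a. (a, X) \<notin> \<Delta> \<and> Perm.apply \<pi> a \<in> B}"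
    (is "?L = ?S")
proof
  show "?L \<subseteq> ?S"
  proof
    fix a assume "a \<in> ?L"
    then obtain b B'' \<pi>'' where ab: "a = Perm.apply (inverse \<pi>) b" and b: "b \<in> B''"
      and o2: "(B'', \<pi>'', X) \<in> var_occs {} t" and nd: "(a, X) \<notin> \<Delta>"
      unfolding Lam_def by auto
    have pa: "Perm.apply \<pi> a = b" using ab perm_ai' by simp
    have "Perm.apply \<pi> a \<in> B"
    proof (cases "Perm.apply \<pi>'' a = Perm.apply \<pi> a")
      case True
      then have "Perm.apply \<pi>'' a \<in> B''" using pa b by simp
      from closed2[OF c o2 this occ nd] show ?thesis .
    next
      case False
      from closed3[OF c o2 occ False nd] show ?thesis by simp
    qed
    with nd show "a \<in> ?S" by simp
  qed
next
  show "?S \<subseteq> ?L"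
  proof
    fix a assume "a \<in> ?S"
    then have "Perm.apply \<pi> a \<in> B" "(a, X) \<notin> \<Delta>" by auto
    then have "Perm.apply \<pi> a \<in> Lam t X" using occ unfolding Lam_def by auto
    moreover have "a = Perm.apply (inverse \<pi>) (Perm.apply \<pi> a)"
      by (simp add: apply_inverse bij_is_inj inv_f_f)
    ultimately have "a \<in> (\<lambda>a. Perm.apply (inverse \<pi>) a) ` Lam t X"
      by blast
    with \<open>(a, X) \<notin> \<Delta>\<close> show "a \<in> ?L" by simp
  qed
qed

lemma occ_set:
  assumes c: "closed_nt \<Delta> t" and occ: "(B, \<pi>, X) \<in> var_occs {} t"
    and occ2: "(B2, \<pi>2, X) \<in> var_occs {} t"
  shows "{a. (a, X) \<notin> \<Delta> \<and> Perm.apply \<pi> a \<in> B} = {a. (a, X) \<notin> \<Delta> \<and> Perm.apply \<pi>2 a \<in> B2}"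
  using closed2[OF c occ _ occ2] closed2[OF c occ2 _ occ] by blast

theorem mainTheorem6:
  fixes \<Delta> :: "'v fctx" and t :: "('f, 'v) nterm"
  assumes "closed_nt \<Delta> t"
  shows "(\<forall>p \<pi> X. nsub t p = Some (NSusp \<pi> X) \<longrightarrow>
            (\<exists>xs. msub (translate \<Delta> t) p = Some (MApp X xs)))
       \<and> (\<forall>X. \<exists>n. \<forall>p xs. msub (translate \<Delta> t) p = Some (MApp X xs) \<longrightarrow> length xs = n)"
proof
  show "\<forall>p \<pi> X. nsub t p = Some (NSusp \<pi> X) \<longrightarrow>
            (\<exists>xs. msub (translate \<Delta> t) p = Some (MApp X xs))"
    unfolding translate_def using nsub_tr by fastforce
next
  show "\<forall>X. \<exists>n. \<forall>p xs. msub (translate \<Delta> t) p = Some (MApp X xs) \<longrightarrow> length xs = n"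
  proof
    fix X
    show "\<exists>n. \<forall>p xs. msub (translate \<Delta> t) p = Some (MApp X xs) \<longrightarrow> length xs = n"
    proof (cases "\<exists>B0 \<pi>0. (B0, \<pi>0, X) \<in> var_occs {} t")
      case False
      show ?thesis
      proof (intro exI allI impI)
        fix p xs assume "msub (translate \<Delta> t) p = Some (MApp X xs)"
        then obtain \<pi> where n: "nsub t p = Some (NSusp \<pi> X)"
          using msub_tr[of "Lam t" \<Delta> t p X xs] unfolding translate_def by blast
        with nsub_occ[OF n] False show "length xs = 0" by blast
      qed
    next
      case True
      then obtain B0 \<pi>0 where o0: "(B0, \<pi>0, X) \<in> var_occs {} t" by blast
      show ?thesis
      proof (intro exI allI impI)
        fix p xs assume "msub (translate \<Delta> t) p = Some (MApp X xs)"
        then obtain \<pi> where n: "nsub t p = Some (NSusp \<pi> X)"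
          and e: "tr (Lam t) \<Delta> (NSusp \<pi> X) = MApp X xs"
          using msub_tr[of "Lam t" \<Delta> t p X xs] unfolding translate_def by blast
        obtain B where o: "(B, \<pi>, X) \<in> var_occs {} t" using nsub_occ[OF n] by blast
        have "xs = map (\<lambda>b. Perm.apply (\<pi>) b)
         (sorted_list_of_set ((\<lambda>a. Perm.apply (inverse \<pi>) a) ` Lam t X - {a. (a, X) \<in> \<Delta>}))"
          using e by simp
        then show "length xs = card {a. (a, X) \<notin> \<Delta> \<and> Perm.apply \<pi>0 a \<in> B0}"
          using key_set[OF assms o] occ_set[OF assms o o0] by simp
      qed
    qed
  qed
qed

end
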